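(* Let $X_1,\dots,X_n$ be independent real-valued random variables. Then \[E\Big[\Big|\sum_{k=1}^nX_k\Big|\wedge1\Big]\le\Big(\sum_{k=1}^nE[\tau^2(X_k)]+\Big(\sum_{k=1}^nE[\tau(X_k)]\Big)^2\Big)^{1/2}+\sum_{k=1}^nE[\tau^2(X_k)].\]
   Context: $\tau\colon\mathbb R\to\mathbb R$ is the truncation function $\tau(\alpha)=\alpha$ if $|\alpha|\le1$ and $\tau(\alpha)=\alpha/|\alpha|$ if $|\alpha|>1$. *)

theory Defs
  imports "HOL-Probability.Probability"
begin

definition trunc :: "real \<Rightarrow> real" where
  "trunc a = (if \<bar>a\<bar> \<le> 1 then a else a / \<bar>a\<bar>)"

end

theory Submission
  imports Defs
begin

lemma trunc_abs_le: "\<bar>trunc a\<bar> \<le> 1"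
  by (auto simp: trunc_def abs_div)

lemma trunc_sq_le: "(trunc a)\<^sup>2 \<le> 1"
  using trunc_abs_le[of a] by (simp add: abs_le_square_iff power_le_one abs_square_le_1)

lemma trunc_big: "1 < \<bar>a\<bar> \<Longrightarrow> (trunc a)\<^sup>2 = 1"
  by (auto simp: trunc_def power_divide)

lemma trunc_meas[measurable]: "trunc \<in> borel_measurable borel"
  unfolding trunc_def by measurable

lemma pointwise:
  fixes x :: "nat \<Rightarrow> real"
  shows "min \<bar>\<Sum>k=1..n. x k\<bar> 1 \<le> \<bar>\<Sum>k=1..n. trunc (x k)\<bar> + (\<Sum>k=1..n. (trunc (x k))\<^sup>2)"
proof (cases "\<forall>k\<in>{1..n}. \<bar>x k\<bar> \<le> 1")
  case True
  then have "(\<Sum>k=1..n. trunc (x k)) = (\<Sum>k=1..n. x k)"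
    by (intro sum.cong) (auto simp: trunc_def)
  moreover have "0 \<le> (\<Sum>k=1..n. (trunc (x k))\<^sup>2)" by (intro sum_nonneg) auto
  ultimately show ?thesis by simp
next
  case False
  then obtain j where j: "j \<in> {1..n}" "1 < \<bar>x j\<bar>" by auto
  have "(trunc (x j))\<^sup>2 \<le> (\<Sum>k=1..n. (trunc (x k))\<^sup>2)"
    using j(1) by (intro member_le_sum) auto
  then have "1 \<le> (\<Sum>k=1..n. (trunc (x k))\<^sup>2)" using trunc_big[OF j(2)] by simp
  then show ?thesis by linarith
qed


lemma (in prob_space) sq_expect_le:
  fixes Z :: "'a \<Rightarrow> real"
  assumes "Z \<in> borel_measurable M" "\<And>x. \<bar>Z x\<bar> \<le> B"
  shows "(expectation Z)\<^sup>2 \<le> expectation (\<lambda>x. (Z x)\<^sup>2)"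
proof -
  have i1: "integrable M Z"
    using assms by (intro integrable_const_bound[where B=B]) auto
  have "\<bar>(Z x)\<^sup>2\<bar> \<le> B\<^sup>2" for x
    using power_mono[OF assms(2)[of x] abs_ge_zero, of 2] by simp
  then have i2: "integrable M (\<lambda>x. (Z x)\<^sup>2)"
    using assms by (intro integrable_const_bound[where B="B\<^sup>2"]) auto
  show ?thesis using variance_eq[OF i1 i2] variance_positive[of Z] by simp
qed

theorem lemma3p10:
  fixes M :: "'a measure" and X :: "nat \<Rightarrow> 'a \<Rightarrow> real" and n :: nat
  assumes "prob_space M"
    and "\<And>k. k \<in> {1..n} \<Longrightarrow> X k \<in> borel_measurable M"
    and "prob_space.indep_vars M (\<lambda>_. borel) X {1..n}"
  shows "prob_space.expectation M (\<lambda>\<omega>. min \<bar>\<Sum>k=1..n. X k \<omega>\<bar> 1)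
    \<le> sqrt ((\<Sum>k=1..n. prob_space.expectation M (\<lambda>\<omega>. (trunc (X k \<omega>))\<^sup>2))
             + (\<Sum>k=1..n. prob_space.expectation M (\<lambda>\<omega>. trunc (X k \<omega>)))\<^sup>2)
      + (\<Sum>k=1..n. prob_space.expectation M (\<lambda>\<omega>. (trunc (X k \<omega>))\<^sup>2))"
proof -
  interpret P: prob_space M by fact
  define Y where "Y k \<omega> = trunc (X k \<omega>)" for k \<omega>
  have Ym[measurable]: "Y k \<in> borel_measurable M" if "k \<in> {1..n}" for k
    using assms(2)[OF that] unfolding Y_def by measurable
  have Yb: "\<bar>Y k \<omega>\<bar> \<le> 1" for k \<omega> unfolding Y_def by (rule trunc_abs_le)
  have Yi: "integrable M (Y k)" if "k \<in> {1..n}" for k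
    using Ym[OF that] Yb by (intro P.integrable_const_bound[where B=1]) auto
  have Yprodb: "\<bar>Y j \<omega> * Y k \<omega>\<bar> \<le> 1" for j k \<omega>
    using Yb[of j \<omega>] Yb[of k \<omega>] by (simp add: abs_mult mult_le_one)
  have Ypi: "integrable M (\<lambda>\<omega>. Y j \<omega> * Y k \<omega>)" if "j \<in> {1..n}" "k \<in> {1..n}" for j k
    using Ym[OF that(1)] Ym[OF that(2)] Yprodb by (intro P.integrable_const_bound[where B=1]) auto
  have Y2i: "integrable M (\<lambda>\<omega>. (Y k \<omega>)\<^sup>2)" if "k \<in> {1..n}" for k
    using Ypi[OF that that] by (simp add: power2_eq_square)
  have indY: "P.indep_vars (\<lambda>_. borel) Y {1..n}"
    unfolding Y_def using assms(3) by (rule P.indep_vars_compose2) auto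
  have cross: "P.expectation (\<lambda>\<omega>. Y j \<omega> * Y k \<omega>) = P.expectation (Y j) * P.expectation (Y k)"
    if "j \<in> {1..n}" "k \<in> {1..n}" "j \<noteq> k" for j k
  proof -
    have ind2: "P.indep_vars (\<lambda>_. borel) Y {j, k}"
      using indY that by (rule_tac P.indep_vars_subset) auto
    have "P.expectation (\<lambda>\<omega>. \<Prod>i\<in>{j,k}. Y i \<omega>) = (\<Prod>i\<in>{j,k}. P.expectation (Y i))"
      using that by (intro P.indep_vars_lebesgue_integral[OF _ ind2]) (auto intro: Yi)
    then show ?thesis using that by simp
  qed
  define T where "T \<omega> = (\<Sum>k=1..n. Y k \<omega>)" for \<omega>
  have Tm[measurable]: "T \<in> borel_measurable M" unfolding T_def by measurable
  have Tb: "\<bar>T \<omega>\<bar> \<le> real n" for \<omega>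
  proof -
    have "\<bar>T \<omega>\<bar> \<le> (\<Sum>k=1..n. \<bar>Y k \<omega>\<bar>)" unfolding T_def by (rule sum_abs)
    also have "\<dots> \<le> (\<Sum>k=1..n. 1)" by (intro sum_mono Yb)
    finally show ?thesis by simp
  qed
  have Ti: "integrable M T"
    using Tb by (intro P.integrable_const_bound[where B="real n"]) auto
  have absTi: "integrable M (\<lambda>\<omega>. \<bar>T \<omega>\<bar>)" using Ti by auto
  have ET2: "P.expectation (\<lambda>\<omega>. (T \<omega>)\<^sup>2) = (\<Sum>j=1..n. \<Sum>k=1..n. P.expectation (\<lambda>\<omega>. Y j \<omega> * Y k \<omega>))"
  proof -
    have "(\<lambda>\<omega>. (T \<omega>)\<^sup>2) = (\<lambda>\<omega>. \<Sum>j=1..n. \<Sum>k=1..n. Y j \<omega> * Y k \<omega>)"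
      unfolding T_def by (simp add: power2_eq_square sum_product)
    then have "P.expectation (\<lambda>\<omega>. (T \<omega>)\<^sup>2) = P.expectation (\<lambda>\<omega>. \<Sum>j=1..n. \<Sum>k=1..n. Y j \<omega> * Y k \<omega>)"
      by simp
    also have "\<dots> = (\<Sum>j=1..n. P.expectation (\<lambda>\<omega>. \<Sum>k=1..n. Y j \<omega> * Y k \<omega>))"
      by (intro Bochner_Integration.integral_sum Bochner_Integration.integrable_sum Ypi) auto
    also have "\<dots> = (\<Sum>j=1..n. \<Sum>k=1..n. P.expectation (\<lambda>\<omega>. Y j \<omega> * Y k \<omega>))"
      by (intro sum.cong refl Bochner_Integration.integral_sum Ypi) auto
    finally show ?thesis .
  qed
  define e where "e k = P.expectation (Y k)" for k
  define s where "s k = P.expectation (\<lambda>\<omega>. (Y k \<omega>)\<^sup>2)" for k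
  have jk: "P.expectation (\<lambda>\<omega>. Y j \<omega> * Y k \<omega>) = (if j = k then s k - (e k)\<^sup>2 else 0) + e j * e k"
    if "j \<in> {1..n}" "k \<in> {1..n}" for j k
    using cross[OF that] by (auto simp: s_def e_def power2_eq_square)
  have "P.expectation (\<lambda>\<omega>. (T \<omega>)\<^sup>2) = (\<Sum>j=1..n. \<Sum>k=1..n. (if j = k then s k - (e k)\<^sup>2 else 0) + e j * e k)"
    unfolding ET2 by (intro sum.cong refl jk) auto
  also have "\<dots> = (\<Sum>k=1..n. (s k - (e k)\<^sup>2)) + (\<Sum>k=1..n. e k)\<^sup>2"
    by (simp add: sum.distrib power2_eq_square sum_product)
  also have "\<dots> \<le> (\<Sum>k=1..n. s k) + (\<Sum>k=1..n. e k)\<^sup>2"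
    by (intro add_mono sum_mono) auto
  finally have ET2le: "P.expectation (\<lambda>\<omega>. (T \<omega>)\<^sup>2) \<le> (\<Sum>k=1..n. s k) + (\<Sum>k=1..n. e k)\<^sup>2" .
  have "(P.expectation (\<lambda>\<omega>. \<bar>T \<omega>\<bar>))\<^sup>2 \<le> P.expectation (\<lambda>\<omega>. \<bar>T \<omega>\<bar>\<^sup>2)"
    using Tb by (intro P.sq_expect_le[where B="real n"]) auto
  then have "(P.expectation (\<lambda>\<omega>. \<bar>T \<omega>\<bar>))\<^sup>2 \<le> (\<Sum>k=1..n. s k) + (\<Sum>k=1..n. e k)\<^sup>2"
    using ET2le by simp
  then have ETabs: "P.expectation (\<lambda>\<omega>. \<bar>T \<omega>\<bar>) \<le> sqrt ((\<Sum>k=1..n. s k) + (\<Sum>k=1..n. e k)\<^sup>2)"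
    by (simp add: real_le_rsqrt)
  have minm: "(\<lambda>\<omega>. min \<bar>\<Sum>k=1..n. X k \<omega>\<bar> 1) \<in> borel_measurable M"
    using assms(2) by measurable
  have mini: "integrable M (\<lambda>\<omega>. min \<bar>\<Sum>k=1..n. X k \<omega>\<bar> 1)"
    using minm by (intro P.integrable_const_bound[where B=1]) auto
  have rhsi: "integrable M (\<lambda>\<omega>. \<bar>T \<omega>\<bar> + (\<Sum>k=1..n. (Y k \<omega>)\<^sup>2))"
    using absTi Y2i by (intro Bochner_Integration.integrable_add Bochner_Integration.integrable_sum) auto
  have "P.expectation (\<lambda>\<omega>. min \<bar>\<Sum>k=1..n. X k \<omega>\<bar> 1)
      \<le> P.expectation (\<lambda>\<omega>. \<bar>T \<omega>\<bar> + (\<Sum>k=1..n. (Y k \<omega>)\<^sup>2))"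
    using mini rhsi by (rule integral_mono) (unfold T_def Y_def, rule pointwise)
  also have "\<dots> = P.expectation (\<lambda>\<omega>. \<bar>T \<omega>\<bar>) + (\<Sum>k=1..n. s k)"
  proof -
    have "P.expectation (\<lambda>\<omega>. \<bar>T \<omega>\<bar> + (\<Sum>k=1..n. (Y k \<omega>)\<^sup>2))
        = P.expectation (\<lambda>\<omega>. \<bar>T \<omega>\<bar>) + P.expectation (\<lambda>\<omega>. \<Sum>k=1..n. (Y k \<omega>)\<^sup>2)"
      using absTi Y2i by (intro Bochner_Integration.integral_add Bochner_Integration.integrable_sum) auto
    moreover have "P.expectation (\<lambda>\<omega>. \<Sum>k=1..n. (Y k \<omega>)\<^sup>2) = (\<Sum>k=1..n. s k)"
      unfolding s_def using Y2i by (intro Bochner_Integration.integral_sum) auto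
    ultimately show ?thesis by simp
  qed
  also have "\<dots> \<le> sqrt ((\<Sum>k=1..n. s k) + (\<Sum>k=1..n. e k)\<^sup>2) + (\<Sum>k=1..n. s k)"
    using ETabs by simp
  finally show ?thesis unfolding s_def e_def Y_def .
qed

end
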